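(* There is a set $A\subseteq\mathbb{N}$ that is $d$-complete but is not $n$-$d$-complete for any $n\in\mathbb{N}$.
   Context: $\varphi_0,\varphi_1,\ldots$ is a standard acceptable enumeration of the partial computable functions $\mathbb{N}\to\mathbb{N}$, $\mathcal{K}=\{e:\varphi_e(e)\text{ defined}\}$. $\mathfrak{P}_{\mathrm{fin}}(\mathbb{N})$ is the set of finite subsets of $\mathbb{N}$; $f\colon\mathbb{N}\to\mathfrak{P}_{\mathrm{fin}}(\mathbb{N})$ is computable if $e\mapsto$ (canonical index of $f(e)$) is computable. A recursively enumerable $A$ is $d$-complete if there is a computable $f\colon\mathbb{N}\to\mathfrak{P}_{\mathrm{fin}}(\mathbb{N})$ with $e\in\mathcal{K}\iff\exists z\in f(e)\,[z\in A]$ for all $e$; it is $n$-$d$-complete if moreover such an $f$ can be chosen with $|f(e)|\leq n$ for all $e$. *)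

theory Defs
  imports Main "HOL-Library.Nat_Bijection"
begin

text \<open>A concrete model of the partial computable functions nat \<Rightarrow> nat:
  codes for a standard Turing-complete basis (zero, successor, Cantor-pair
  projections, composition, pairing, primitive recursion, minimisation),
  with a big-step evaluation relation.\<close>

datatype recf = Zf | Sf | Fst | Snd | Comp recf recf | Pr recf recf
  | Rec recf recf | Mn recf

inductive ev :: "recf \<Rightarrow> nat \<Rightarrow> nat \<Rightarrow> bool" where
  ev_Z: "ev Zf x 0"
| ev_S: "ev Sf x (Suc x)"
| ev_Fst: "ev Fst x (fst (prod_decode x))"
| ev_Snd: "ev Snd x (snd (prod_decode x))"
| ev_Comp: "ev g x y \<Longrightarrow> ev f y z \<Longrightarrow> ev (Comp f g) x z"
| ev_Pr: "ev f x a \<Longrightarrow> ev g x b \<Longrightarrow> ev (Pr f g) x (prod_encode (a, b))"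
| ev_Rec0: "ev f x y \<Longrightarrow> ev (Rec f g) (prod_encode (x, 0)) y"
| ev_RecS: "ev (Rec f g) (prod_encode (x, n)) y \<Longrightarrow>
    ev g (prod_encode (x, prod_encode (n, y))) z \<Longrightarrow>
    ev (Rec f g) (prod_encode (x, Suc n)) z"
| ev_Mn: "ev f (prod_encode (x, n)) 0 \<Longrightarrow>
    (\<forall>m<n. \<exists>k. ev f (prod_encode (x, m)) (Suc k)) \<Longrightarrow> ev (Mn f) x n"

primrec code :: "recf \<Rightarrow> nat" where
  "code Zf = prod_encode (0, 0)"
| "code Sf = prod_encode (1, 0)"
| "code Fst = prod_encode (2, 0)"
| "code Snd = prod_encode (3, 0)"
| "code (Comp f g) = prod_encode (4, prod_encode (code f, code g))"
| "code (Pr f g) = prod_encode (5, prod_encode (code f, code g))"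
| "code (Rec f g) = prod_encode (6, prod_encode (code f, code g))"
| "code (Mn f) = prod_encode (7, code f)"

text \<open>phi e x y: the e-th partial computable function maps x to y
  (numbers that are not codes denote the nowhere-defined function).\<close>
definition phi :: "nat \<Rightarrow> nat \<Rightarrow> nat \<Rightarrow> bool" where
  "phi e x y \<longleftrightarrow> (\<exists>c. code c = e \<and> ev c x y)"

definition K :: "nat set" where
  "K = {e. \<exists>y. phi e e y}"

definition re :: "nat set \<Rightarrow> bool" where
  "re A \<longleftrightarrow> (\<exists>e. A = {x. \<exists>y. phi e x y})"

definition computable :: "(nat \<Rightarrow> nat) \<Rightarrow> bool" where
  "computable g \<longleftrightarrow> (\<exists>e. \<forall>x. phi e x (g x))"

definition canon :: "nat set \<Rightarrow> nat" where
  "canon S = (\<Sum>z\<in>S. 2 ^ z)"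

definition computable_fin :: "(nat \<Rightarrow> nat set) \<Rightarrow> bool" where
  "computable_fin f \<longleftrightarrow> (\<forall>e. finite (f e)) \<and> computable (\<lambda>e. canon (f e))"

definition d_complete :: "nat set \<Rightarrow> bool" where
  "d_complete A \<longleftrightarrow> re A \<and>
     (\<exists>f. computable_fin f \<and> (\<forall>e. e \<in> K \<longleftrightarrow> (\<exists>z\<in>f e. z \<in> A)))"

definition n_d_complete :: "nat \<Rightarrow> nat set \<Rightarrow> bool" where
  "n_d_complete n A \<longleftrightarrow> re A \<and>
     (\<exists>f. computable_fin f \<and> (\<forall>e. card (f e) \<le> n) \<and>
          (\<forall>e. e \<in> K \<longleftrightarrow> (\<exists>z\<in>f e. z \<in> A)))"

end

theory Submission
  imports Defs
begin


definition pe :: "nat \<Rightarrow> nat \<Rightarrow> nat" where "pe a b = prod_encode (a, b)"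
definition pf :: "nat \<Rightarrow> nat" where "pf z = fst (prod_decode z)"
definition ps :: "nat \<Rightarrow> nat" where "ps z = snd (prod_decode z)"

lemma pf_pe[simp]: "pf (pe a b) = a" by (simp add: pf_def pe_def)
lemma ps_pe[simp]: "ps (pe a b) = b" by (simp add: ps_def pe_def)
lemma pe_pf_ps[simp]: "pe (pf z) (ps z) = z" by (simp add: pf_def ps_def pe_def)
lemma pe_eq[simp]: "pe a b = pe c d \<longleftrightarrow> a = c \<and> b = d" by (simp add: pe_def)
lemma pe_00[simp]: "pe 0 0 = 0" by (simp add: pe_def prod_encode_def)
lemma pe_ge1: "a \<le> pe a b" by (simp add: pe_def le_prod_encode_1)
lemma pe_ge2: "b \<le> pe a b" by (simp add: pe_def le_prod_encode_2)
lemma pf_le: "pf z \<le> z" by (metis pe_ge1 pe_pf_ps)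
lemma ps_le: "ps z \<le> z" by (metis pe_ge2 pe_pf_ps)

lemma ev_Fst': "ev Fst x (pf x)" using ev_Fst by (simp add: pf_def)
lemma ev_Snd': "ev Snd x (ps x)" using ev_Snd by (simp add: ps_def)
lemma ev_Pr': "ev f x a \<Longrightarrow> ev g x b \<Longrightarrow> ev (Pr f g) x (pe a b)"
  using ev_Pr by (simp add: pe_def)

lemma ev_det: "ev c x y \<Longrightarrow> ev c x y' \<Longrightarrow> y = y'"
proof (induction arbitrary: y' rule: ev.induct)
  case (ev_Z x) then show ?case by (cases rule: ev.cases) auto
next
  case (ev_S x) then show ?case by (cases rule: ev.cases) auto
next
  case (ev_Fst x) then show ?case by (cases rule: ev.cases) auto
next
  case (ev_Snd x) then show ?case by (cases rule: ev.cases) auto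
next
  case (ev_Comp g x y f z) from ev_Comp.prems show ?case
    by (cases rule: ev.cases) (use ev_Comp.IH in fastforce)+
next
  case (ev_Pr f x a g b) from ev_Pr.prems show ?case
    by (cases rule: ev.cases) (use ev_Pr.IH in fastforce)+
next
  case (ev_Rec0 f x y g) from ev_Rec0.prems show ?case
    by (cases rule: ev.cases) (use ev_Rec0.IH in fastforce)+
next
  case (ev_RecS f g x n y z) from ev_RecS.prems show ?case
    by (cases rule: ev.cases) (use ev_RecS.IH in fastforce)+
next
  case (ev_Mn f x n)
  have A: "ev f (prod_encode (x, y')) 0" "\<forall>m<y'. \<exists>k. ev f (prod_encode (x, m)) (Suc k)"
    using ev_Mn.prems by (auto elim: ev.cases)
  have "\<not> y' < n"
  proof
    assume "y' < n"
    then obtain k where "ev f (prod_encode (x, y')) (Suc k)" "\<forall>z. ev f (prod_encode (x, y')) z \<longrightarrow> Suc k = z"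
      using ev_Mn.IH(2) by blast
    then show False using A(1) by fastforce
  qed
  moreover have "\<not> n < y'"
  proof
    assume "n < y'"
    then obtain k where "ev f (prod_encode (x, n)) (Suc k)" using A(2) by blast
    then show False using ev_Mn.IH(1) by fastforce
  qed
  ultimately show ?case by simp
qed

definition tot :: "(nat \<Rightarrow> nat) \<Rightarrow> bool" where
  "tot f \<longleftrightarrow> (\<exists>c. \<forall>x. ev c x (f x))"

lemma tot_cong: "tot f \<Longrightarrow> (\<And>x. f x = g x) \<Longrightarrow> tot g"
proof -
  assume "tot f" "\<And>x. f x = g x"
  then have "f = g" by auto
  with \<open>tot f\<close> show ?thesis by simp
qed

lemma tot_id: "tot (\<lambda>x. x)"
  unfolding tot_def by (rule exI[of _ "Pr Fst Snd"]) (metis ev_Fst' ev_Snd' ev_Pr' pe_pf_ps)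

lemma tot_comp: "tot f \<Longrightarrow> tot g \<Longrightarrow> tot (\<lambda>x. f (g x))"
  unfolding tot_def using ev_Comp by blast

lemma tot_pf: "tot f \<Longrightarrow> tot (\<lambda>x. pf (f x))"
  unfolding tot_def using ev_Comp ev_Fst' by blast
lemma tot_ps: "tot f \<Longrightarrow> tot (\<lambda>x. ps (f x))"
  unfolding tot_def using ev_Comp ev_Snd' by blast
lemma tot_Suc: "tot f \<Longrightarrow> tot (\<lambda>x. Suc (f x))"
  unfolding tot_def using ev_Comp ev_S by blast
lemma tot_pe: "tot f \<Longrightarrow> tot g \<Longrightarrow> tot (\<lambda>x. pe (f x) (g x))"
  unfolding tot_def using ev_Pr' by blast

primrec cnst :: "nat \<Rightarrow> recf" where
  "cnst 0 = Zf" | "cnst (Suc k) = Comp Sf (cnst k)"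

lemma ev_cnst: "ev (cnst k) x k"
  by (induction k) (auto intro: ev.intros)

lemma tot_const: "tot (\<lambda>x. k)"
  unfolding tot_def using ev_cnst by blast

lemma ev_Rec_gen:
  assumes f: "\<And>x. ev cf x (f x)" and g: "\<And>z. ev cg z (g z)"
    and h0: "\<And>x. h x 0 = f x" and hS: "\<And>x n. h x (Suc n) = g (pe x (pe n (h x n)))"
  shows "ev (Rec cf cg) (pe x n) (h x n)"
proof (induction n)
  case 0 then show ?case using ev_Rec0[OF f] h0 by (simp add: pe_def)
next
  case (Suc n)
  show ?case using ev_RecS[OF Suc[unfolded pe_def] g[of "pe x (pe n (h x n))", unfolded pe_def]]
    hS by (simp add: pe_def)
qed

definition tot2 :: "(nat \<Rightarrow> nat \<Rightarrow> nat) \<Rightarrow> bool" where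
  "tot2 h \<longleftrightarrow> tot (\<lambda>z. h (pf z) (ps z))"

lemma tot_prim:
  assumes "tot f" "tot g" "\<And>x. h x 0 = f x" "\<And>x n. h x (Suc n) = g (pe x (pe n (h x n)))"
  shows "tot2 h"
proof -
  from assms(1,2) obtain cf cg where "\<And>x. ev cf x (f x)" "\<And>z. ev cg z (g z)" 
    unfolding tot_def by blast
  from ev_Rec_gen[OF this assms(3,4)] have "\<And>x n. ev (Rec cf cg) (pe x n) (h x n)" .
  then have "\<forall>z. ev (Rec cf cg) z (h (pf z) (ps z))" by (metis pe_pf_ps)
  then show ?thesis unfolding tot2_def tot_def by blast
qed

lemma tot_prim3:
  assumes "tot f" "tot (\<lambda>w. g (pf w) (pf (ps w)) (ps (ps w)))"
    "\<And>x. h x 0 = f x" "\<And>x n. h x (Suc n) = g x n (h x n)"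
  shows "tot2 h"
  by (rule tot_prim[OF assms(1,2)]) (simp_all add: assms(3,4))

lemma tot2_app: "tot2 h \<Longrightarrow> tot f \<Longrightarrow> tot g \<Longrightarrow> tot (\<lambda>x. h (f x) (g x))"
  unfolding tot2_def by (drule tot_comp[OF _ tot_pe], assumption+) simp



lemma tot_pf0: "tot pf" using tot_pf[OF tot_id] by simp
lemma tot_ps0: "tot ps" using tot_ps[OF tot_id] by simp
lemma tot_Suc0: "tot Suc" using tot_Suc[OF tot_id] by simp

lemmas tb = tot_pf0 tot_ps0 tot_Suc0 tot_id tot_const tot_pf tot_ps tot_Suc tot_pe

lemma tot_prim3':
  assumes "\<And>x. h x 0 = f x" "\<And>x n. h x (Suc n) = g x n (h x n)"
    "tot f" "tot (\<lambda>w. g (pf w) (pf (ps w)) (ps (ps w)))"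
  shows "tot2 h"
  using tot_prim3[OF assms(3,4,1,2)] .

definition dec :: "(nat \<Rightarrow> bool) \<Rightarrow> bool" where
  "dec P \<longleftrightarrow> tot (\<lambda>x. if P x then 0 else 1)"

lemma tot_if0:
  assumes "tot p" "tot a" "tot b"
  shows "tot (\<lambda>x. if p x = 0 then a x else b x)"
proof -
  define sel where "sel y n = (if n = 0 then pf y else ps y)" for y n :: nat
  have "tot2 sel"
    by (rule tot_prim3'[where f="\<lambda>y. pf y" and g="\<lambda>x n prev. ps x"], simp add: sel_def, simp add: sel_def, (intro tb)+)
  from tot2_app[OF this tot_pe[OF assms(2,3)] assms(1)] show ?thesis
    by (rule tot_cong) (simp add: sel_def)
qed

lemma tot_if: assumes "dec P" "tot a" "tot b" shows "tot (\<lambda>x. if P x then a x else b x)"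
proof -
  have "tot (\<lambda>x. if (if P x then 0 else 1) = (0::nat) then a x else b x)"
    using tot_if0 assms[unfolded dec_def] by blast
  then show ?thesis by (rule tot_cong) simp
qed

lemma tot_add: "tot f \<Longrightarrow> tot g \<Longrightarrow> tot (\<lambda>x. f x + g x)"
proof -
  have "tot2 (\<lambda>x n. x + n)"
    by (rule tot_prim3'[where f="\<lambda>x. x" and g="\<lambda>x n prev. Suc prev"], simp, simp, (intro tb)+)
  then show "tot f \<Longrightarrow> tot g \<Longrightarrow> tot (\<lambda>x. f x + g x)" by (rule tot2_app)
qed

lemma tot_mult: "tot f \<Longrightarrow> tot g \<Longrightarrow> tot (\<lambda>x. f x * g x)"
proof -
  have "tot2 (\<lambda>x n. x * n)"
    by (rule tot_prim3'[where f="\<lambda>x. 0" and g="\<lambda>x n prev. prev + x"], simp, simp, (intro tb tot_add)+)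
  then show "tot f \<Longrightarrow> tot g \<Longrightarrow> tot (\<lambda>x. f x * g x)" by (rule tot2_app)
qed

lemma tot_pred: "tot f \<Longrightarrow> tot (\<lambda>x. f x - 1)"
proof -
  have "tot2 (\<lambda>x n. n - 1)"
    by (rule tot_prim3'[where f="\<lambda>x. 0" and g="\<lambda>x n prev. n"], simp, simp, (intro tb)+)
  from tot2_app[OF this tot_const] show "tot f \<Longrightarrow> tot (\<lambda>x. f x - 1)" .
qed

lemma tot_sub: "tot f \<Longrightarrow> tot g \<Longrightarrow> tot (\<lambda>x. f x - g x)"
proof -
  have "tot2 (\<lambda>x n. x - n)"
    by (rule tot_prim3'[where f="\<lambda>x. x" and g="\<lambda>x n prev. prev - 1"], simp, simp, (intro tb tot_pred)+)
  then show "tot f \<Longrightarrow> tot g \<Longrightarrow> tot (\<lambda>x. f x - g x)" by (rule tot2_app)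
qed

lemmas tb2 = tb tot_add tot_mult tot_sub

lemma dec_eq: "tot f \<Longrightarrow> tot g \<Longrightarrow> dec (\<lambda>x. f x = g x)"
  unfolding dec_def
  by (rule tot_cong[OF tot_if0[where p="\<lambda>x. (f x - g x) + (g x - f x)" and a="\<lambda>x. 0" and b="\<lambda>x. 1"]])
    ((intro tb2; assumption)+, auto)

lemma dec_less: "tot f \<Longrightarrow> tot g \<Longrightarrow> dec (\<lambda>x. f x < g x)"
  unfolding dec_def
  by (rule tot_cong[OF tot_if0[where p="\<lambda>x. g x - f x" and a="\<lambda>x. 1" and b="\<lambda>x. 0"]])
    ((intro tb2; assumption)+, auto)

lemma dec_not: "dec P \<Longrightarrow> dec (\<lambda>x. \<not> P x)"
  unfolding dec_def
  by (rule tot_cong[OF tot_if0[where a="\<lambda>x. 1" and b="\<lambda>x. 0"]]) (assumption, (intro tb)+, auto)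

lemma dec_le: "tot f \<Longrightarrow> tot g \<Longrightarrow> dec (\<lambda>x. f x \<le> g x)"
  using dec_not[OF dec_less[of g f]] by (simp add: not_less)

lemma dec_conj: "dec P \<Longrightarrow> dec Q \<Longrightarrow> dec (\<lambda>x. P x \<and> Q x)"
  unfolding dec_def
  by (rule tot_cong[OF tot_if0[where p="\<lambda>x. (if P x then 0 else 1) + (if Q x then 0 else 1)" and a="\<lambda>x. 0" and b="\<lambda>x. 1"]])
    ((intro tb2; assumption)+, auto)

lemma dec_disj: "dec P \<Longrightarrow> dec Q \<Longrightarrow> dec (\<lambda>x. P x \<or> Q x)"
proof -
  assume "dec P" "dec Q"
  from dec_not[OF dec_conj[OF dec_not[OF this(1)] dec_not[OF this(2)]]] show ?thesis by simp
qed

lemma dec_imp: "dec P \<Longrightarrow> dec Q \<Longrightarrow> dec (\<lambda>x. P x \<longrightarrow> Q x)"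
proof -
  assume "dec P" "dec Q"
  from dec_disj[OF dec_not[OF this(1)] this(2)] show ?thesis by simp
qed

lemma dec_iff: "dec P \<Longrightarrow> dec Q \<Longrightarrow> dec (\<lambda>x. P x \<longleftrightarrow> Q x)"
proof -
  assume "dec P" "dec Q"
  from dec_conj[OF dec_imp[OF this] dec_imp[OF this(2,1)]] show ?thesis by (simp add: iff_conv_conj_imp)
qed

lemma dec_const: "dec (\<lambda>x. b)"
  unfolding dec_def by (cases b) (simp_all add: tot_const)

lemma dec_compose: "dec P \<Longrightarrow> tot f \<Longrightarrow> dec (\<lambda>x. P (f x))"
  unfolding dec_def by (drule tot_comp, assumption) simp

lemma dec2_shift: "dec (\<lambda>z. P (pf z) (ps z)) \<Longrightarrow> dec (\<lambda>w. P (pf w) (pf (ps w)))"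
  by (drule dec_compose[where f="\<lambda>w. pe (pf w) (pf (ps w))"], (intro tb)+) simp

lemma tot2_shift: "tot (\<lambda>z. P (pf z) (ps z)) \<Longrightarrow> tot (\<lambda>w. P (pf w) (pf (ps w)))"
  by (drule tot_comp[where g="\<lambda>w. pe (pf w) (pf (ps w))"], (intro tb)+) simp

lemma dec_ex:
  assumes P: "dec (\<lambda>z. P (pf z) (ps z))" and n: "tot n"
  shows "dec (\<lambda>x. \<exists>i<n x. P x i)"
proof -
  define B where "B x i = (if \<exists>j<i. P x j then 0 else (1::nat))" for x i
  have "tot2 B"
  proof (rule tot_prim3[where f="\<lambda>x. 1" and g="\<lambda>x i prev. if P x i then 0 else prev"])
    show "tot (\<lambda>w. if P (pf w) (pf (ps w)) then 0 else ps (ps w))"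
      by (rule tot_if[OF dec2_shift[OF P]]) (intro tb)+
  qed (auto simp: B_def less_Suc_eq intro: tot_const)
  from tot2_app[OF this tot_id n] show ?thesis unfolding dec_def B_def .
qed

lemma dec_all:
  assumes P: "dec (\<lambda>z. P (pf z) (ps z))" and n: "tot n"
  shows "dec (\<lambda>x. \<forall>i<n x. P x i)"
proof -
  have "dec (\<lambda>z. \<not> P (pf z) (ps z))" using dec_not[OF P] .
  from dec_not[OF dec_ex[OF this n]] show ?thesis by simp
qed

lemma dec_ex_le:
  assumes P: "dec (\<lambda>z. P (pf z) (ps z))" and n: "tot n"
  shows "dec (\<lambda>x. \<exists>i\<le>n x. P x i)"
  using dec_ex[OF P tot_Suc[OF n]] by (simp add: less_Suc_eq_le)

lemma dec_all_le:
  assumes P: "dec (\<lambda>z. P (pf z) (ps z))" and n: "tot n"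
  shows "dec (\<lambda>x. \<forall>i\<le>n x. P x i)"
  using dec_all[OF P tot_Suc[OF n]] by (simp add: less_Suc_eq_le)

lemma tot_sum:
  assumes f: "tot (\<lambda>z. f (pf z) (ps z))" and n: "tot n"
  shows "tot (\<lambda>x. \<Sum>i<n x. f x i)"
proof -
  have "tot2 (\<lambda>x m. \<Sum>i<m. f x i)"
    by (rule tot_prim3'[where f="\<lambda>x. 0" and g="\<lambda>x i prev. prev + f x i"], simp, simp, (intro tb2 tot2_shift[OF f])+)
  from tot2_app[OF this tot_id n] show ?thesis .
qed

primrec bmin :: "(nat \<Rightarrow> bool) \<Rightarrow> nat \<Rightarrow> nat" where
  "bmin P 0 = 0"
| "bmin P (Suc n) = (if bmin P n < n then bmin P n else if P n then n else Suc n)"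

lemma bmin_le: "bmin P n \<le> n"
  by (induction n) auto

lemma bmin_P: "bmin P n < n \<Longrightarrow> P (bmin P n)"
  by (induction n) (auto split: if_splits)

lemma bmin_min: "j < bmin P n \<Longrightarrow> \<not> P j"
proof (induction n)
  case 0 then show ?case by simp
next
  case (Suc n)
  show ?case
  proof (cases "bmin P n < n")
    case True with Suc show ?thesis by simp
  next
    case False
    then have eq: "bmin P n = n" using bmin_le[of P n] by linarith
    show ?thesis
    proof (cases "P n")
      case True then show ?thesis using Suc eq by simp
    next
      case False then show ?thesis using Suc eq by (auto simp: less_Suc_eq)
    qed
  qed
qed

lemma bmin_ex: assumes "P i" "i < n" shows "bmin P n < n"
proof (rule ccontr)
  assume "\<not> bmin P n < n"
  then have "bmin P n = n" using bmin_le[of P n] by linarith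
  then show False using bmin_min[of i P n] assms by simp
qed

lemma bmin_eq: "P i \<Longrightarrow> i < n \<Longrightarrow> bmin P n \<le> i"
  using bmin_min not_le by blast

lemma tot_bmin:
  assumes P: "dec (\<lambda>z. P (pf z) (ps z))" and n: "tot n"
  shows "tot (\<lambda>x. bmin (P x) (n x))"
proof -
  have "tot2 (\<lambda>x m. bmin (P x) m)"
  proof (rule tot_prim3[where f="\<lambda>x. 0" and
        g="\<lambda>x i prev. if prev < i then prev else if P x i then i else Suc i"])
    show "tot (\<lambda>w. if ps (ps w) < pf (ps w) then ps (ps w) else if P (pf w) (pf (ps w)) then pf (ps w) else Suc (pf (ps w)))"
      by (intro tot_if dec_less dec2_shift[OF P] tb)
  qed (simp_all add: tot_const)
  from tot2_app[OF this tot_id n] show ?thesis .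
qed

lemma tot_pow2: "tot f \<Longrightarrow> tot (\<lambda>x. 2 ^ f x)"
proof -
  have "tot2 (\<lambda>x n. 2 ^ n)"
    by (rule tot_prim3'[where f="\<lambda>x. 1" and g="\<lambda>x n prev. prev + prev"], simp, simp, (intro tb2)+)
  from tot2_app[OF this tot_const] show "tot f \<Longrightarrow> tot (\<lambda>x. 2 ^ f x)" .
qed

lemma tot_div2: "tot f \<Longrightarrow> tot (\<lambda>x. f x div 2)"
proof -
  define hr where "hr (y::nat) n = pe (n div 2) (n mod 2)" for y n :: nat
  have "tot2 hr"
  proof (rule tot_prim3[where f="\<lambda>x. 0" and
        g="\<lambda>x n prev. if ps prev = 0 then pe (pf prev) 1 else pe (Suc (pf prev)) 0"])
    show "tot (\<lambda>w. if ps (ps (ps w)) = 0 then pe (pf (ps (ps w))) 1 else pe (Suc (pf (ps (ps w)))) 0)"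
      by (intro tot_if dec_eq tb)
  next
    fix x n show "hr x (Suc n) = (if ps (hr x n) = 0 then pe (pf (hr x n)) 1 else pe (Suc (pf (hr x n))) 0)"
      unfolding hr_def by (simp; presburger)
  qed (simp_all add: hr_def tot_const)
  from tot_pf[OF tot2_app[OF this tot_const]] show "tot f \<Longrightarrow> tot (\<lambda>x. f x div 2)"
    by (simp add: hr_def)
qed

lemma tot_divpow: "tot f \<Longrightarrow> tot g \<Longrightarrow> tot (\<lambda>x. f x div 2 ^ g x)"
proof -
  have e: "\<And>x n. (x::nat) div 2 ^ Suc n = x div 2 ^ n div 2"
    by (metis div_mult2_eq power_Suc2)
  have "tot2 (\<lambda>v z. v div 2 ^ z)"
    by (rule tot_prim3'[where f="\<lambda>x. x" and g="\<lambda>x n prev. prev div 2"], simp, rule e, (intro tb tot_div2)+)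
  then show "tot f \<Longrightarrow> tot g \<Longrightarrow> tot (\<lambda>x. f x div 2 ^ g x)" by (rule tot2_app)
qed

lemma dec_odd: "tot f \<Longrightarrow> dec (\<lambda>x. odd (f x))"
proof -
  assume "tot f"
  have "dec (\<lambda>x. f x - 2 * (f x div 2) = 1)"
    by (intro dec_eq tot_sub tot_mult tot_div2 \<open>tot f\<close> tot_const)
  moreover have "\<And>n::nat. (n - 2 * (n div 2) = 1) = odd n" by presburger
  ultimately show ?thesis by simp
qed

lemma dec_even: "tot f \<Longrightarrow> dec (\<lambda>x. even (f x))"
  using dec_not[OF dec_odd] by simp

lemmas tot_intros = tot_pf0 tot_ps0 tot_Suc0 tot_id tot_const tot_pf tot_ps tot_Suc tot_pe tot_add tot_mult tot_sub
  tot_if tot_pow2 tot_div2 tot_divpow tot_sum tot_bmin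
lemmas dec_intros = dec_eq dec_less dec_le dec_not dec_conj dec_disj dec_imp dec_iff dec_const
  dec_ex dec_all dec_ex_le dec_all_le dec_odd dec_even



datatype frame = FComp recf | FPr1 recf nat | FPr2 nat | FRec recf nat nat | FMn recf nat nat
datatype mode = Ev recf nat | Rt nat

fun astep :: "mode \<times> frame list \<Rightarrow> mode \<times> frame list" where
  "astep (Ev Zf x, S) = (Rt 0, S)"
| "astep (Ev Sf x, S) = (Rt (Suc x), S)"
| "astep (Ev Fst x, S) = (Rt (pf x), S)"
| "astep (Ev Snd x, S) = (Rt (ps x), S)"
| "astep (Ev (Comp f g) x, S) = (Ev g x, FComp f # S)"
| "astep (Ev (Pr f g) x, S) = (Ev f x, FPr1 g x # S)"
| "astep (Ev (Rec f g) z, S) = (if ps z = 0 then (Ev f (pf z), S)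
     else (Ev (Rec f g) (pe (pf z) (ps z - 1)), FRec g (pf z) (ps z - 1) # S))"
| "astep (Ev (Mn f) x, S) = (Ev f (pe x 0), FMn f x 0 # S)"
| "astep (Rt v, []) = (Rt v, [])"
| "astep (Rt v, FComp f # S) = (Ev f v, S)"
| "astep (Rt a, FPr1 g x # S) = (Ev g x, FPr2 a # S)"
| "astep (Rt b, FPr2 a # S) = (Rt (pe a b), S)"
| "astep (Rt y, FRec g x m # S) = (Ev g (pe x (pe m y)), S)"
| "astep (Rt v, FMn f x n # S) = (if v = 0 then (Rt n, S)
     else (Ev f (pe x (Suc n)), FMn f x (Suc n) # S))"

definition reach :: "mode \<times> frame list \<Rightarrow> mode \<times> frame list \<Rightarrow> bool" where
  "reach a b \<longleftrightarrow> (\<exists>k. (astep ^^ k) a = b)"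

lemma reach_refl: "reach a a"
  unfolding reach_def by (rule exI[of _ 0]) simp

lemma reach_step: "reach (astep a) b \<Longrightarrow> reach a b"
  unfolding reach_def by (metis funpow_Suc_right o_apply)

lemma reach_trans: "reach a b \<Longrightarrow> reach b c \<Longrightarrow> reach a c"
  unfolding reach_def by (metis funpow_add o_apply)

lemma ev_pe_Rec0: "ev f x y \<Longrightarrow> ev (Rec f g) (pe x 0) y"
  using ev_Rec0 by (simp add: pe_def)
lemma ev_pe_RecS: "ev (Rec f g) (pe x n) y \<Longrightarrow> ev g (pe x (pe n z0)) z \<Longrightarrow> z0 = y \<Longrightarrow>
    ev (Rec f g) (pe x (Suc n)) z"
  using ev_RecS by (simp add: pe_def)

lemma mn_chain:
  assumes "\<forall>m<n. \<exists>k. ev f (pe x m) (Suc k) \<and> (\<forall>S. reach (Ev f (pe x m), S) (Rt (Suc k), S))"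
    and "\<forall>S. reach (Ev f (pe x n), S) (Rt 0, S)"
  shows "m \<le> n \<Longrightarrow> reach (Ev f (pe x m), FMn f x m # S) (Rt n, S)"
proof (induction "n - m" arbitrary: m)
  case 0
  then have "m = n" by simp
  have "reach (Ev f (pe x m), FMn f x m # S) (Rt 0, FMn f x m # S)" using assms(2) \<open>m = n\<close> by simp
  moreover have "reach (Rt 0, FMn f x m # S) (Rt n, S)"
    by (rule reach_step) (simp add: \<open>m = n\<close> reach_refl)
  ultimately show ?case by (rule reach_trans)
next
  case (Suc d)
  then have "m < n" by simp
  then obtain k where k: "\<forall>S. reach (Ev f (pe x m), S) (Rt (Suc k), S)" using assms(1) by blast
  have "reach (Ev f (pe x m), FMn f x m # S) (Rt (Suc k), FMn f x m # S)" using k by simp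
  moreover have "reach (Rt (Suc k), FMn f x m # S) (Rt n, S)"
    by (rule reach_step) (use Suc.hyps(1)[of "Suc m"] Suc.hyps(2) in simp)
  ultimately show ?case by (rule reach_trans)
qed

lemma complete: "ev c x v \<Longrightarrow> reach (Ev c x, S) (Rt v, S)"
proof (induction arbitrary: S rule: ev.induct)
  case (ev_Z x) then show ?case by (rule reach_step) (simp add: reach_refl)
next
  case (ev_S x) then show ?case by (rule reach_step) (simp add: reach_refl)
next
  case (ev_Fst x) then show ?case by (rule reach_step) (simp add: reach_refl pf_def)
next
  case (ev_Snd x) then show ?case by (rule reach_step) (simp add: reach_refl ps_def)
next
  case (ev_Comp g x y f z)
  show ?case
    by (rule reach_step, simp, rule reach_trans[OF ev_Comp.IH(1)], rule reach_step, simp, rule ev_Comp.IH(2))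
next
  case (ev_Pr f x a g b)
  have "reach (Ev (Pr f g) x, S) (Rt a, FPr1 g x # S)" by (rule reach_step, simp, rule ev_Pr.IH(1))
  moreover have "reach (Rt a, FPr1 g x # S) (Rt b, FPr2 a # S)" by (rule reach_step, simp, rule ev_Pr.IH(2))
  moreover have "reach (Rt b, FPr2 a # S) (Rt (prod_encode (a, b)), S)"
    by (rule reach_step) (simp add: pe_def reach_refl)
  ultimately show ?case by (meson reach_trans)
next
  case (ev_Rec0 f x y g)
  show ?case by (rule reach_step) (simp add: pe_def[symmetric], rule ev_Rec0.IH)
next
  case (ev_RecS f g x n y z)
  have "reach (Ev (Rec f g) (pe x (Suc n)), S) (Rt y, FRec g x n # S)"
    by (rule reach_step) (simp, rule ev_RecS.IH(1)[unfolded pe_def[symmetric]])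
  moreover have "reach (Rt y, FRec g x n # S) (Rt z, S)"
    by (rule reach_step) (simp, rule ev_RecS.IH(2)[unfolded pe_def[symmetric]])
  ultimately show ?case by (simp add: pe_def[symmetric] reach_trans)
next
  case (ev_Mn f x n)
  have M: "reach (Ev f (pe x 0), FMn f x 0 # S) (Rt n, S)"
    by (rule mn_chain) (use ev_Mn.IH in \<open>auto simp: pe_def\<close>)
  show ?case by (rule reach_step) (simp add: M)
qed

inductive acc :: "frame list \<Rightarrow> nat \<Rightarrow> nat \<Rightarrow> bool" where
  acc_nil: "acc [] v v"
| acc_Comp: "ev f y z \<Longrightarrow> acc S z w \<Longrightarrow> acc (FComp f # S) y w"
| acc_Pr1: "ev g x b \<Longrightarrow> acc S (pe a b) w \<Longrightarrow> acc (FPr1 g x # S) a w"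
| acc_Pr2: "acc S (pe a b) w \<Longrightarrow> acc (FPr2 a # S) b w"
| acc_Rec: "ev g (pe x (pe m y)) z \<Longrightarrow> acc S z w \<Longrightarrow> acc (FRec g x m # S) y w"
| acc_Mn0: "acc S n w \<Longrightarrow> acc (FMn f x n # S) 0 w"
| acc_MnS: "ev f (pe x (Suc n)) v' \<Longrightarrow> acc (FMn f x (Suc n) # S) v' w \<Longrightarrow> acc (FMn f x n # S) (Suc k) w"

inductive_cases accE_Comp: "acc (FComp f # S) y w"
inductive_cases accE_Pr1: "acc (FPr1 g x # S) a w"
inductive_cases accE_Pr2: "acc (FPr2 a # S) b w"
inductive_cases accE_Rec: "acc (FRec g x m # S) y w"
inductive_cases accE_nil: "acc [] v w"

lemma acc_Mn_lemma:
  "acc S0 v w \<Longrightarrow> S0 = FMn f x n # S \<Longrightarrow> ev f (pe x n) v \<Longrightarrow> (\<forall>m<n. \<exists>k. ev f (pe x m) (Suc k))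
   \<Longrightarrow> \<exists>N. ev (Mn f) x N \<and> acc S N w"
proof (induction arbitrary: n rule: acc.induct)
  case (acc_Mn0 S' n' w f' x')
  then show ?case using ev_Mn[of f x n] by (auto simp: pe_def)
next
  case (acc_MnS f' x' n' v' S' w k)
  then have "\<forall>m<Suc n. \<exists>k. ev f (pe x m) (Suc k)" by (auto simp: less_Suc_eq)
  with acc_MnS show ?case by auto
qed auto

fun good :: "mode \<times> frame list \<Rightarrow> nat \<Rightarrow> bool" where
  "good (Ev c x, S) w = (\<exists>v. ev c x v \<and> acc S v w)"
| "good (Rt v, S) w = acc S v w"

lemma good_back: "good (astep st) w \<Longrightarrow> good st w"
proof (induction st rule: astep.induct)
  case (1 x S) then show ?case using ev_Z by auto
next
  case (2 x S) then show ?case using ev_S by auto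
next
  case (3 x S) then show ?case using ev_Fst' by auto
next
  case (4 x S) then show ?case using ev_Snd' by auto
next
  case (5 f g x S)
  then obtain v where "ev g x v" "acc (FComp f # S) v w" by auto
  moreover from this(2) obtain z where "ev f v z" "acc S z w" by (rule accE_Comp)
  ultimately show ?case unfolding good.simps using ev_Comp by blast
next
  case (6 f g x S)
  then obtain a where "ev f x a" "acc (FPr1 g x # S) a w" by auto
  moreover from this(2) obtain b where "ev g x b" "acc S (pe a b) w" by (rule accE_Pr1)
  ultimately show ?case unfolding good.simps using ev_Pr' by blast
next
  case (7 f g z S)
  show ?case
  proof (cases "ps z = 0")
    case True
    with 7 obtain v where "ev f (pf z) v" "acc S v w" by auto
    moreover have "z = pe (pf z) 0" using True by (metis pe_pf_ps)
    ultimately show ?thesis unfolding good.simps using ev_pe_Rec0 by metis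
  next
    case False
    then obtain m where m: "ps z = Suc m" by (cases "ps z") auto
    from 7 False m obtain y where y: "ev (Rec f g) (pe (pf z) m) y" "acc (FRec g (pf z) m # S) y w" by auto
    from y(2) obtain zz where "ev g (pe (pf z) (pe m y)) zz" "acc S zz w" by (rule accE_Rec)
    moreover have "z = pe (pf z) (Suc m)" using m by (metis pe_pf_ps)
    ultimately show ?thesis unfolding good.simps using ev_pe_RecS[OF y(1)] by metis
  qed
next
  case (8 f x S)
  then obtain v where "ev f (pe x 0) v" "acc (FMn f x 0 # S) v w" by auto
  from acc_Mn_lemma[OF this(2) refl this(1)] show ?case by simp
next
  case (9 v) then show ?case by simp
next
  case (10 v f S) then show ?case using acc_Comp by auto
next
  case (11 a g x S)
  then obtain b where "ev g x b" "acc (FPr2 a # S) b w" by auto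
  moreover from this(2) have "acc S (pe a b) w" by (rule accE_Pr2)
  ultimately show ?case using acc_Pr1 by simp
next
  case (12 b a S) then show ?case using acc_Pr2 by simp
next
  case (13 y g x m S) then show ?case using acc_Rec by auto
next
  case (14 v f x n S)
  show ?case
  proof (cases v)
    case 0 then show ?thesis using 14 acc_Mn0 by simp
  next
    case (Suc k) then show ?thesis using 14 acc_MnS by auto
  qed
qed

lemma good_back_n: "good ((astep ^^ k) st) w \<Longrightarrow> good st w"
proof (induction k arbitrary: st)
  case 0 then show ?case by simp
next
  case (Suc k)
  then have "good ((astep ^^ k) (astep st)) w" by (simp add: funpow_Suc_right del: funpow.simps)
  then show ?case using Suc.IH good_back by blast
qed

lemma sound: "(astep ^^ k) (Ev c x, []) = (Rt w, []) \<Longrightarrow> ev c x w"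
proof -
  assume a: "(astep ^^ k) (Ev c x, []) = (Rt w, [])"
  have "good (Rt w, []) w" by (simp add: acc_nil)
  then have "good (Ev c x, []) w" using good_back_n[of k "(Ev c x, [])" w] a by simp
  then show ?thesis by (auto elim: acc.cases)
qed

lemma complete': "ev c x w \<Longrightarrow> \<exists>k. (astep ^^ k) (Ev c x, []) = (Rt w, [])"
  using complete[of c x w "[]"] unfolding reach_def .

lemma astep_final: "(astep ^^ k) (Rt w, []) = (Rt w, [])"
  by (induction k) auto



lemma code_pe: "code Zf = pe 0 0" "code Sf = pe 1 0" "code Fst = pe 2 0" "code Snd = pe 3 0"
  "code (Comp f g) = pe 4 (pe (code f) (code g))" "code (Pr f g) = pe 5 (pe (code f) (code g))"
  "code (Rec f g) = pe 6 (pe (code f) (code g))" "code (Mn f) = pe 7 (code f)"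
  by (simp_all add: pe_def)

declare code.simps[simp del]
declare pe_00[simp del]
lemma pe_eq0[simp]: "pe a b = 0 \<longleftrightarrow> a = 0 \<and> b = 0" by (metis pe_00 pe_eq)
lemma pe_eq0'[simp]: "0 = pe a b \<longleftrightarrow> a = 0 \<and> b = 0" by (metis pe_00 pe_eq)
lemma pf_0[simp]: "pf 0 = 0" using pf_pe[of 0 0] pe_00 by metis
lemma ps_0[simp]: "ps 0 = 0" using ps_pe[of 0 0] pe_00 by metis

lemma code_inj: "code c = code d \<Longrightarrow> c = d"
proof (induction c arbitrary: d)
  case Zf then show ?case by (cases d) (simp_all add: code_pe)
next
  case Sf then show ?case by (cases d) (simp_all add: code_pe)
next
  case Fst then show ?case by (cases d) (simp_all add: code_pe)
next
  case Snd then show ?case by (cases d) (simp_all add: code_pe)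
next
  case (Comp c1 c2) then show ?case by (cases d) (simp_all add: code_pe)
next
  case (Pr c1 c2) then show ?case by (cases d) (simp_all add: code_pe)
next
  case (Rec c1 c2) then show ?case by (cases d) (simp_all add: code_pe)
next
  case (Mn c1) then show ?case by (cases d) (simp_all add: code_pe)
qed

lemma tot_iter:
  assumes "tot f" "tot init" "tot n"
  shows "tot (\<lambda>x. (f ^^ (n x)) (init x))"
proof -
  have "tot2 (\<lambda>w k. (f ^^ k) (init w))"
    by (rule tot_prim3'[where f=init and g="\<lambda>w k prev. f prev"], simp, simp,
        rule assms(2), rule tot_comp[OF assms(1) tot_ps[OF tot_ps0]])
  from tot2_app[OF this tot_id assms(3)] show ?thesis .
qed

fun encF :: "frame \<Rightarrow> nat" where
  "encF (FComp f) = pe 0 (code f)"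
| "encF (FPr1 g x) = pe 1 (pe (code g) x)"
| "encF (FPr2 a) = pe 2 a"
| "encF (FRec g x m) = pe 3 (pe (code g) (pe x m))"
| "encF (FMn f x n) = pe 4 (pe (code f) (pe x n))"

fun encS :: "frame list \<Rightarrow> nat" where
  "encS [] = 0"
| "encS (F # S) = Suc (pe (encF F) (encS S))"

fun encM :: "mode \<Rightarrow> nat" where
  "encM (Ev c x) = pe 0 (pe (code c) x)"
| "encM (Rt v) = pe 1 v"

fun enc :: "mode \<times> frame list \<Rightarrow> nat" where
  "enc (m, S) = pe (encM m) (encS S)"

definition nstep :: "nat \<Rightarrow> nat" where
  "nstep z = (let m = pf z; S = ps z in
    if pf m = 0 then
      (let e = pf (ps m); x = ps (ps m); t = pf e; r = ps e in
       if t = 0 then pe (pe 1 0) S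
       else if t = 1 then pe (pe 1 (Suc x)) S
       else if t = 2 then pe (pe 1 (pf x)) S
       else if t = 3 then pe (pe 1 (ps x)) S
       else if t = 4 then pe (pe 0 (pe (ps r) x)) (Suc (pe (pe 0 (pf r)) S))
       else if t = 5 then pe (pe 0 (pe (pf r) x)) (Suc (pe (pe 1 (pe (ps r) x)) S))
       else if t = 6 then
         (if ps x = 0 then pe (pe 0 (pe (pf r) (pf x))) S
          else pe (pe 0 (pe e (pe (pf x) (ps x - 1)))) (Suc (pe (pe 3 (pe (ps r) (pe (pf x) (ps x - 1)))) S)))
       else if t = 7 then pe (pe 0 (pe r (pe x 0))) (Suc (pe (pe 4 (pe r (pe x 0))) S))
       else z)
    else
      (let v = ps m in
       if S = 0 then z
       else (let F = pf (S - 1); S' = ps (S - 1); ft = pf F; fr = ps F in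
         if ft = 0 then pe (pe 0 (pe fr v)) S'
         else if ft = 1 then pe (pe 0 (pe (pf fr) (ps fr))) (Suc (pe (pe 2 v) S'))
         else if ft = 2 then pe (pe 1 (pe fr v)) S'
         else if ft = 3 then pe (pe 0 (pe (pf fr) (pe (pf (ps fr)) (pe (ps (ps fr)) v)))) S'
         else if ft = 4 then
           (if v = 0 then pe (pe 1 (ps (ps fr))) S'
            else pe (pe 0 (pe (pf fr) (pe (pf (ps fr)) (Suc (ps (ps fr))))))
                   (Suc (pe (pe 4 (pe (pf fr) (pe (pf (ps fr)) (Suc (ps (ps fr)))))) S')))
         else z)))"

lemma nstep_enc: "nstep (enc st) = enc (astep st)"
  by (induction st rule: astep.induct) (simp_all add: nstep_def Let_def code_pe del: code.simps)

lemma tot_nstep: "tot nstep"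
  unfolding nstep_def Let_def by (intro tot_intros dec_intros)

definition ninit :: "nat \<Rightarrow> nat \<Rightarrow> nat" where "ninit e x = pe (pe 0 (pe e x)) 0"
definition nrun :: "nat \<Rightarrow> nat \<Rightarrow> nat \<Rightarrow> nat" where "nrun e x s = (nstep ^^ s) (ninit e x)"
definition nfinal :: "nat \<Rightarrow> bool" where "nfinal z \<longleftrightarrow> pf (pf z) = 1 \<and> ps z = 0"
definition nout :: "nat \<Rightarrow> nat" where "nout z = ps (pf z)"

lemma nrun_enc: "nrun (code c) x s = enc ((astep ^^ s) (Ev c x, []))"
proof (induction s)
  case 0 then show ?case by (simp add: nrun_def ninit_def)
next
  case (Suc s) then show ?case by (simp add: nrun_def nstep_enc[symmetric])
qed

lemma nfinal_enc: "nfinal (enc st) \<longleftrightarrow> (\<exists>v. st = (Rt v, []))"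
proof -
  obtain m S where st: "st = (m, S)" by (cases st)
  show ?thesis unfolding st by (cases m; cases S) (simp_all add: nfinal_def)
qed

lemma nstep_final: "nfinal z \<Longrightarrow> nstep z = z"
  by (simp add: nfinal_def nstep_def Let_def)

lemma nrun_mono: "nfinal (nrun e x s) \<Longrightarrow> s \<le> s' \<Longrightarrow> nrun e x s' = nrun e x s"
proof (induction s' )
  case 0 then show ?case by simp
next
  case (Suc s')
  show ?case
  proof (cases "s = Suc s'")
    case True then show ?thesis by simp
  next
    case False
    then have "s \<le> s'" using Suc by simp
    then have "nrun e x s' = nrun e x s" using Suc by simp
    then show ?thesis using Suc.prems(1) nstep_final by (simp add: nrun_def)
  qed
qed

fun cstep :: "nat list \<Rightarrow> nat list" where
  "cstep [] = []"
| "cstep (e # L) = (if pf e \<le> 3 then (if ps e = 0 then L else e # L)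
     else if pf e \<le> 6 then pf (ps e) # ps (ps e) # L
     else if pf e = 7 then ps e # L else e # L)"

fun encL :: "nat list \<Rightarrow> nat" where
  "encL [] = 0"
| "encL (e # L) = Suc (pe e (encL L))"

definition ncstep :: "nat \<Rightarrow> nat" where
  "ncstep z = (if z = 0 then 0 else
    (let e = pf (z - 1); L = ps (z - 1) in
     if pf e \<le> 3 then (if ps e = 0 then L else z)
     else if pf e \<le> 6 then Suc (pe (pf (ps e)) (Suc (pe (ps (ps e)) L)))
     else if pf e = 7 then Suc (pe (ps e) L) else z))"

lemma ncstep_enc: "ncstep (encL L) = encL (cstep L)"
  by (cases L) (simp_all add: ncstep_def Let_def)

lemma tot_ncstep: "tot ncstep"
  unfolding ncstep_def Let_def by (intro tot_intros dec_intros)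

lemma cstep_complete: "\<exists>k. (cstep ^^ k) (code c # L) = L"
proof (induction c arbitrary: L)
  case Zf then show ?case by (rule exI[of _ 1]) (simp add: code_pe)
next
  case Sf then show ?case by (rule exI[of _ 1]) (simp add: code_pe)
next
  case Fst then show ?case by (rule exI[of _ 1]) (simp add: code_pe)
next
  case Snd then show ?case by (rule exI[of _ 1]) (simp add: code_pe)
next
  case (Comp c1 c2)
  obtain k1 where k1: "(cstep ^^ k1) (code c1 # code c2 # L) = code c2 # L" using Comp.IH(1) by blast
  obtain k2 where k2: "(cstep ^^ k2) (code c2 # L) = L" using Comp.IH(2) by blast
  have "(cstep ^^ (Suc (k2 + k1))) (code (Comp c1 c2) # L) = L"
    by (simp add: funpow_Suc_right funpow_add code_pe k1 k2 del: funpow.simps)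
  then show ?case by blast
next
  case (Pr c1 c2)
  obtain k1 where k1: "(cstep ^^ k1) (code c1 # code c2 # L) = code c2 # L" using Pr.IH(1) by blast
  obtain k2 where k2: "(cstep ^^ k2) (code c2 # L) = L" using Pr.IH(2) by blast
  have "(cstep ^^ (Suc (k2 + k1))) (code (Pr c1 c2) # L) = L"
    by (simp add: funpow_Suc_right funpow_add code_pe k1 k2 del: funpow.simps)
  then show ?case by blast
next
  case (Rec c1 c2)
  obtain k1 where k1: "(cstep ^^ k1) (code c1 # code c2 # L) = code c2 # L" using Rec.IH(1) by blast
  obtain k2 where k2: "(cstep ^^ k2) (code c2 # L) = L" using Rec.IH(2) by blast
  have "(cstep ^^ (Suc (k2 + k1))) (code (Rec c1 c2) # L) = L"
    by (simp add: funpow_Suc_right funpow_add code_pe k1 k2 del: funpow.simps)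
  then show ?case by blast
next
  case (Mn c1)
  obtain k1 where k1: "(cstep ^^ k1) (code c1 # L) = L" using Mn.IH(1) by blast
  have "(cstep ^^ (Suc k1)) (code (Mn c1) # L) = L"
    by (simp add: funpow_Suc_right funpow_add code_pe k1 del: funpow.simps)
  then show ?case by blast
qed

lemma cstep_sound_1: "\<forall>e\<in>set (cstep L). \<exists>c. code c = e \<Longrightarrow> \<forall>e\<in>set L. \<exists>c. code c = e"
proof (cases L)
  case Nil then show ?thesis by simp
next
  case (Cons e L')
  assume a: "\<forall>e\<in>set (cstep L). \<exists>c. code c = e"
  have ev: "\<exists>c. code c = e"
  proof -
    consider (a) "pf e \<le> 3" "ps e = 0" | (b) "pf e \<le> 3" "ps e \<noteq> 0" | (c) "\<not> pf e \<le> 3" "pf e \<le> 6"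
      | (d) "pf e = 7" | (e) "\<not> pf e \<le> 6" "pf e \<noteq> 7" by linarith
    then show ?thesis
    proof cases
      case a
      then have "e = pe (pf e) 0" by (metis pe_pf_ps)
      moreover have "pf e = 0 \<or> pf e = 1 \<or> pf e = 2 \<or> pf e = 3" using a by linarith
      ultimately show ?thesis by (metis code_pe(1-4))
    next
      case b then show ?thesis using a Cons by simp
    next
      case c
      with a Cons obtain c1 c2 where cc: "code c1 = pf (ps e)" "code c2 = ps (ps e)" by auto
      have "e = pe (pf e) (pe (code c1) (code c2))" using cc by simp
      moreover have "pf e = 4 \<or> pf e = 5 \<or> pf e = 6" using c by linarith
      ultimately show ?thesis by (metis code_pe(5-7))
    next
      case d
      with a Cons obtain c1 where cc: "code c1 = ps e" by auto
      have "e = pe 7 (code c1)" using cc d by (metis pe_pf_ps)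
      then show ?thesis by (metis code_pe(8))
    next
      case e then show ?thesis using a Cons by simp
    qed
  qed
  have "\<forall>e\<in>set L'. \<exists>c. code c = e"
    using a Cons by (auto split: if_splits)
  then show ?thesis using ev Cons by simp
qed

lemma cstep_sound: "(cstep ^^ k) L = [] \<Longrightarrow> \<forall>e\<in>set L. \<exists>c. code c = e"
proof (induction k arbitrary: L)
  case 0 then show ?case by simp
next
  case (Suc k)
  then have "(cstep ^^ k) (cstep L) = []" by (simp add: funpow_Suc_right del: funpow.simps)
  then show ?case using Suc.IH cstep_sound_1 by blast
qed

definition nchk :: "nat \<Rightarrow> nat \<Rightarrow> nat" where "nchk e s = (ncstep ^^ s) (Suc (pe e 0))"

lemma nchk_enc: "nchk e s = encL ((cstep ^^ s) [e])"
  by (induction s) (simp_all add: nchk_def ncstep_enc[symmetric])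

lemma encL_0: "encL L = 0 \<longleftrightarrow> L = []"
  by (cases L) auto

lemma nchk_sound: "nchk e s = 0 \<Longrightarrow> \<exists>c. code c = e"
  using cstep_sound[of s "[e]"] by (simp add: nchk_enc encL_0)

lemma nchk_complete: "\<exists>s. nchk (code c) s = 0"
  using cstep_complete[of c "[]"] by (simp add: nchk_enc encL_0)

lemma nchk_mono: "nchk e s = 0 \<Longrightarrow> s \<le> s' \<Longrightarrow> nchk e s' = 0"
proof (induction s')
  case 0 then show ?case by simp
next
  case (Suc s') then show ?case
    by (cases "s = Suc s'") (simp_all add: nchk_def ncstep_def)
qed

definition Kw :: "nat \<Rightarrow> nat \<Rightarrow> nat \<Rightarrow> bool" where
  "Kw e x s \<longleftrightarrow> nchk e s = 0 \<and> nfinal (nrun e x s)"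

lemma Kw_mono: "Kw e x s \<Longrightarrow> s \<le> s' \<Longrightarrow> Kw e x s' \<and> nout (nrun e x s') = nout (nrun e x s)"
  unfolding Kw_def using nchk_mono[of e s s'] nrun_mono[of e x s s'] by simp

lemma Kw_sound: "Kw e x s \<Longrightarrow> phi e x (nout (nrun e x s))"
proof -
  assume K: "Kw e x s"
  then obtain c where c: "code c = e" using nchk_sound unfolding Kw_def by blast
  have "nfinal (nrun e x s)" using K unfolding Kw_def by simp
  then have "nfinal (enc ((astep ^^ s) (Ev c x, [])))" using c nrun_enc[of c x s] by simp
  then obtain v where v: "(astep ^^ s) (Ev c x, []) = (Rt v, [])" using nfinal_enc by blast
  then have "ev c x v" by (rule sound)
  moreover have "nout (nrun e x s) = v" using v c[symmetric] nrun_enc by (simp add: nout_def)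
  ultimately show ?thesis using c phi_def by auto
qed

lemma Kw_complete: "phi e x y \<Longrightarrow> \<exists>s. Kw e x s \<and> nout (nrun e x s) = y"
proof -
  assume "phi e x y"
  then obtain c where c: "code c = e" "ev c x y" unfolding phi_def by blast
  obtain k where k: "(astep ^^ k) (Ev c x, []) = (Rt y, [])" using complete'[OF c(2)] by blast
  obtain s1 where s1: "nchk e s1 = 0" using nchk_complete c(1) by blast
  have nk: "nrun e x k = enc (Rt y, [])" using k nrun_enc[of c x k] c(1) by simp
  have f: "nfinal (nrun e x k)" "nout (nrun e x k) = y"
    unfolding nk by (simp_all add: nout_def nfinal_def)
  define s where "s = max s1 k"
  have "nchk e s = 0" using nchk_mono[OF s1, of s] s_def by simp
  moreover have "nrun e x s = nrun e x k" using nrun_mono[OF f(1), of s] s_def by simp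
  ultimately have "Kw e x s \<and> nout (nrun e x s) = y" using f unfolding Kw_def by simp
  then show ?thesis by blast
qed

lemma phi_det: "phi e x y \<Longrightarrow> phi e x y' \<Longrightarrow> y = y'"
proof -
  assume "phi e x y" "phi e x y'"
  then obtain c c' where "code c = e" "ev c x y" "code c' = e" "ev c' x y'" unfolding phi_def by blast
  then have "c = c'" using code_inj by simp
  then show ?thesis using ev_det \<open>ev c x y\<close> \<open>ev c' x y'\<close> by simp
qed

lemma Kw_out: "Kw e x s \<Longrightarrow> phi e x y \<Longrightarrow> nout (nrun e x s) = y"
  using Kw_sound phi_det by metis

lemma halt_iff: "(\<exists>y. phi e x y) \<longleftrightarrow> (\<exists>s. Kw e x s)"
  using Kw_sound Kw_complete by blast

lemma tot_nrun: "tot a \<Longrightarrow> tot b \<Longrightarrow> tot s \<Longrightarrow> tot (\<lambda>x. nrun (a x) (b x) (s x))"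
  unfolding nrun_def ninit_def by (intro tot_iter tot_nstep tot_intros)

lemma tot_nchk: "tot a \<Longrightarrow> tot s \<Longrightarrow> tot (\<lambda>x. nchk (a x) (s x))"
  unfolding nchk_def by (intro tot_iter tot_ncstep tot_intros)

lemma dec_Kw: "tot a \<Longrightarrow> tot b \<Longrightarrow> tot s \<Longrightarrow> dec (\<lambda>x. Kw (a x) (b x) (s x))"
  unfolding Kw_def nfinal_def by (intro dec_intros tot_intros tot_nrun tot_nchk)

lemma tot_nout: "tot f \<Longrightarrow> tot (\<lambda>x. nout (f x))"
  unfolding nout_def by (intro tot_intros)



unbundle bit_operations_syntax

section \<open>finite sets as numbers\<close>

definition bset :: "nat \<Rightarrow> nat set" where "bset v = {z. odd (v div 2 ^ z)}"
definition popc :: "nat \<Rightarrow> nat" where "popc v = (\<Sum>z<v. if odd (v div 2 ^ z) then 1 else 0)"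

lemma bset_sub: "bset v \<subseteq> {..<v}"
proof
  fix z assume "z \<in> bset v"
  then have "v div 2 ^ z \<noteq> 0" unfolding bset_def by (cases "v div 2 ^ z") auto
  then have "2 ^ z \<le> v" by (simp add: div_eq_0_iff not_less)
  moreover have "z < 2 ^ z" by (rule less_exp)
  ultimately have "z < v" by linarith
  then show "z \<in> {..<v}" by simp
qed

lemma finite_bset: "finite (bset v)"
  using bset_sub finite_subset by blast

lemma popc_card: "popc v = card (bset v)"
proof -
  have "popc v = (\<Sum>z\<in>{z\<in>{..<v}. odd (v div 2 ^ z)}. 1)"
    unfolding popc_def by (subst sum.inter_filter) simp_all
  also have "{z\<in>{..<v}. odd (v div 2 ^ z)} = bset v" using bset_sub unfolding bset_def by auto
  finally show ?thesis by simp
qed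

lemma bit_canon0: "finite F \<Longrightarrow> \<forall>z. bit (canon F) z \<longleftrightarrow> z \<in> F"
proof (induction F rule: finite_induct)
  case empty then show ?case by (simp add: canon_def)
next
  case (insert a F)
  have c: "canon (insert a F) = 2 ^ a + canon F"
    using insert by (simp add: canon_def)
  have "(2::nat) ^ a AND canon F = 0"
    by (rule bit_eqI) (use insert in \<open>auto simp: bit_and_iff bit_exp_iff\<close>)
  then have "canon (insert a F) = 2 ^ a OR canon F" using c disjunctive_add_eq_or by simp
  then show ?case using insert by (auto simp: bit_or_iff bit_exp_iff)
qed

lemma bit_canon: "finite F \<Longrightarrow> bit (canon F) z \<longleftrightarrow> z \<in> F"
  using bit_canon0 by blast

lemma bset_canon: "finite F \<Longrightarrow> bset (canon F) = F"
  unfolding bset_def using bit_canon bit_iff_odd by blast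

lemma popc_canon: "finite F \<Longrightarrow> popc (canon F) = card F"
  by (simp add: popc_card bset_canon)

lemma tot_popc: assumes A: "tot f" shows "tot (\<lambda>x. popc (f x))"
  unfolding popc_def by (intro tot_intros dec_intros tot_comp[OF A] A)

section \<open>the construction\<close>

definition cc :: "nat \<Rightarrow> nat" where "cc k = code (cnst k)"

lemma cc_simps: "cc 0 = 0" "cc (Suc k) = pe 4 (pe (pe 1 0) (cc k))"
  by (simp_all add: cc_def code_pe pe_00)

lemma tot_cc: "tot f \<Longrightarrow> tot (\<lambda>x. cc (f x))"
proof -
  have "tot2 (\<lambda>y k. cc k)"
    by (rule tot_prim3'[where f="\<lambda>x. 0" and g="\<lambda>x n prev. pe 4 (pe (pe 1 0) prev)"],
        simp add: cc_simps, simp add: cc_simps, (intro tot_intros)+)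
  from tot2_app[OF this tot_const] show "tot f \<Longrightarrow> tot (\<lambda>x. cc (f x))" .
qed

definition wit :: "nat \<Rightarrow> nat \<Rightarrow> nat" where
  "wit u k = pe 4 (pe u (pe 5 (pe (code (Pr Fst Snd)) (cc k))))"

definition wprog :: "recf \<Rightarrow> nat \<Rightarrow> recf" where
  "wprog W k = Comp W (Pr (Pr Fst Snd) (cnst k))"

lemma code_wprog: "code (wprog W k) = wit (code W) k"
  by (simp add: wprog_def wit_def code_pe cc_def)

lemma tot_wit: "tot a \<Longrightarrow> tot b \<Longrightarrow> tot (\<lambda>x. wit (a x) (b x))"
  unfolding wit_def by (intro tot_intros tot_cc)

definition inK :: "nat \<Rightarrow> nat \<Rightarrow> bool" where "inK e s \<longleftrightarrow> Kw e e s"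

definition cnt :: "nat \<Rightarrow> nat \<Rightarrow> nat" where
  "cnt r s = (\<Sum>e<Suc r. if inK e s then 1 else 0)"

definition Fv :: "nat \<Rightarrow> nat \<Rightarrow> nat \<Rightarrow> nat \<Rightarrow> nat" where
  "Fv u r m s = nout (nrun (pf r) (wit u (pe r m)) s)"

definition Fready :: "nat \<Rightarrow> nat \<Rightarrow> nat \<Rightarrow> nat \<Rightarrow> bool" where
  "Fready u r m s \<longleftrightarrow> Kw (pf r) (wit u (pe r m)) s \<and> popc (Fv u r m s) \<le> ps r"

definition rest :: "nat \<Rightarrow> nat \<Rightarrow> nat \<Rightarrow> nat \<Rightarrow> bool" where
  "rest u e s z \<longleftrightarrow> (\<exists>r<e. \<exists>m<Suc (Suc r). Fready u r m s \<and> odd (Fv u r m s div 2 ^ z))"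

definition bsz :: "nat \<Rightarrow> nat" where "bsz e = Suc e * Suc e * Suc e"

definition ie :: "nat \<Rightarrow> nat \<Rightarrow> nat \<Rightarrow> nat" where
  "ie u e s = bmin (\<lambda>i. \<not> rest u e s (pe e i)) (bsz e)"

definition Tb :: "nat \<Rightarrow> nat \<Rightarrow> nat" where
  "Tb e s = bmin (\<lambda>t. inK e t) (Suc s)"

definition inA :: "nat \<Rightarrow> nat \<Rightarrow> nat \<Rightarrow> bool" where
  "inA u z s \<longleftrightarrow> inK (pf z) s \<and> ps z = ie u (pf z) (Tb (pf z) s)"

definition ready :: "nat \<Rightarrow> nat \<Rightarrow> nat \<Rightarrow> bool" where
  "ready x k s \<longleftrightarrow> Kw (pf (pf k)) x s \<and> popc (nout (nrun (pf (pf k)) x s)) \<le> ps (pf k)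
     \<and> ps k \<le> cnt (pf k) s"

definition gp :: "nat \<Rightarrow> nat \<Rightarrow> nat \<Rightarrow> bool" where
  "gp x k s \<longleftrightarrow> ready x k s \<and> (\<forall>s'<s. \<not> ready x k s') \<and>
     (\<forall>z<nout (nrun (pf (pf k)) x s). odd (nout (nrun (pf (pf k)) x s) div 2 ^ z) \<longrightarrow> \<not> inA (pf (ps x)) z s)"

lemma dec_inK: assumes A: "tot a" "tot b" shows "dec (\<lambda>x. inK (a x) (b x))"
  unfolding inK_def by (intro dec_Kw tot_comp[OF A(1)] tot_comp[OF A(2)] A)

lemma tot_cnt: assumes A: "tot a" "tot b" shows "tot (\<lambda>x. cnt (a x) (b x))"
  unfolding cnt_def by (intro tot_intros dec_inK tot_comp[OF A(1)] tot_comp[OF A(2)] A)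

lemma tot_Fv: assumes A: "tot a" "tot b" "tot c" "tot d" shows "tot (\<lambda>x. Fv (a x) (b x) (c x) (d x))"
  unfolding Fv_def by (intro tot_nout tot_nrun tot_wit tot_intros tot_comp[OF A(1)] tot_comp[OF A(2)] tot_comp[OF A(3)] tot_comp[OF A(4)] A)

lemma dec_Fready: assumes A: "tot a" "tot b" "tot c" "tot d" shows "dec (\<lambda>x. Fready (a x) (b x) (c x) (d x))"
  unfolding Fready_def by (intro dec_intros dec_Kw tot_popc tot_Fv tot_wit tot_intros tot_comp[OF A(1)] tot_comp[OF A(2)] tot_comp[OF A(3)] tot_comp[OF A(4)] A)

lemma dec_rest: assumes A: "tot a" "tot b" "tot c" "tot d" shows "dec (\<lambda>x. rest (a x) (b x) (c x) (d x))"
  unfolding rest_def by (intro dec_intros dec_Fready tot_Fv tot_intros tot_comp[OF A(1)] tot_comp[OF A(2)] tot_comp[OF A(3)] tot_comp[OF A(4)] A)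

lemma tot_ie: assumes A: "tot a" "tot b" "tot c" shows "tot (\<lambda>x. ie (a x) (b x) (c x))"
  unfolding ie_def bsz_def by (intro tot_intros dec_intros dec_rest tot_comp[OF A(1)] tot_comp[OF A(2)] tot_comp[OF A(3)] A)

lemma tot_Tb: assumes A: "tot a" "tot b" shows "tot (\<lambda>x. Tb (a x) (b x))"
  unfolding Tb_def by (intro tot_intros dec_inK tot_comp[OF A(1)] tot_comp[OF A(2)] A)

lemma dec_inA: assumes A: "tot a" "tot b" "tot c" shows "dec (\<lambda>x. inA (a x) (b x) (c x))"
  unfolding inA_def by (intro dec_intros dec_inK tot_ie tot_Tb tot_intros tot_comp[OF A(1)] tot_comp[OF A(2)] tot_comp[OF A(3)] A)

lemma dec_ready: assumes A: "tot a" "tot b" "tot c" shows "dec (\<lambda>x. ready (a x) (b x) (c x))"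
  unfolding ready_def by (intro dec_intros dec_Kw tot_popc tot_nout tot_nrun tot_cnt tot_intros tot_comp[OF A(1)] tot_comp[OF A(2)] tot_comp[OF A(3)] A)

lemma dec_gp: assumes A: "tot a" "tot b" "tot c" shows "dec (\<lambda>x. gp (a x) (b x) (c x))"
  unfolding gp_def by (intro dec_intros dec_ready dec_inA tot_nout tot_nrun tot_intros tot_comp[OF A(1)] tot_comp[OF A(2)] tot_comp[OF A(3)] A)



lemma mn_halt:
  assumes c: "\<And>w. ev c w (g w)"
  shows "(\<exists>y. ev (Mn c) x y) \<longleftrightarrow> (\<exists>n. g (pe x n) = 0)"
proof
  assume "\<exists>y. ev (Mn c) x y"
  then obtain y where "ev (Mn c) x y" by blast
  then have "ev c (prod_encode (x, y)) 0" by (auto elim: ev.cases)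
  then have "ev c (pe x y) 0" by (simp add: pe_def)
  then have "g (pe x y) = 0" using c ev_det by blast
  then show "\<exists>n. g (pe x n) = 0" by blast
next
  assume "\<exists>n. g (pe x n) = 0"
  then obtain n where n: "g (pe x n) = 0" by blast
  define N where "N = (LEAST n. g (pe x n) = 0)"
  have N: "g (pe x N) = 0" unfolding N_def using n by (rule LeastI)
  have "\<forall>m<N. \<exists>k. ev c (prod_encode (x, m)) (Suc k)"
  proof (intro allI impI)
    fix m assume "m < N"
    then have "g (pe x m) \<noteq> 0" unfolding N_def using not_less_Least by blast
    then obtain k where "g (pe x m) = Suc k" by (cases "g (pe x m)") auto
    then show "\<exists>k. ev c (prod_encode (x, m)) (Suc k)" using c[of "pe x m"] by (auto simp: pe_def)
  qed
  moreover have "ev c (prod_encode (x, N)) 0" using c[of "pe x N"] N by (simp add: pe_def)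
  ultimately show "\<exists>y. ev (Mn c) x y" using ev_Mn by blast
qed

definition cgp :: recf where
  "cgp = (SOME c. \<forall>w. ev c w (if gp (pf (pf w)) (ps (pf w)) (ps w) then 0 else 1))"

lemma cgp_ev: "ev cgp w (if gp (pf (pf w)) (ps (pf w)) (ps w) then 0 else 1)"
proof -
  have "dec (\<lambda>w. gp (pf (pf w)) (ps (pf w)) (ps w))"
    by (intro dec_gp tot_intros)
  then have "\<exists>c. \<forall>w. ev c w (if gp (pf (pf w)) (ps (pf w)) (ps w) then 0 else 1)"
    unfolding dec_def tot_def .
  then show ?thesis unfolding cgp_def by (rule someI_ex[THEN spec])
qed

definition U :: recf where "U = Mn cgp"
definition u0 :: nat where "u0 = code U"

lemma ev_wprog: "ev (wprog W k) x y \<longleftrightarrow> ev W (pe x k) y"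
proof
  assume "ev (wprog W k) x y"
  then obtain w where w: "ev (Pr (Pr Fst Snd) (cnst k)) x w" "ev W w y"
    unfolding wprog_def by (auto elim: ev.cases)
  have "ev (Pr (Pr Fst Snd) (cnst k)) x (pe x k)"
    using ev_Pr'[OF ev_Pr'[OF ev_Fst' ev_Snd'] ev_cnst] by simp
  then have "w = pe x k" using w(1) ev_det by blast
  then show "ev W (pe x k) y" using w(2) by simp
next
  assume "ev W (pe x k) y"
  moreover have "ev (Pr (Pr Fst Snd) (cnst k)) x (pe x k)"
    using ev_Pr'[OF ev_Pr'[OF ev_Fst' ev_Snd'] ev_cnst] by simp
  ultimately show "ev (wprog W k) x y" unfolding wprog_def using ev_Comp by blast
qed

lemma halt_wprog: "(\<exists>y. ev (wprog U k) x y) \<longleftrightarrow> (\<exists>s. gp x k s)"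
proof -
  have "(\<exists>y. ev (wprog U k) x y) \<longleftrightarrow> (\<exists>y. ev (Mn cgp) (pe x k) y)"
    by (simp add: ev_wprog U_def)
  also have "\<dots> \<longleftrightarrow> (\<exists>n. (if gp (pf (pf (pe (pe x k) n))) (ps (pf (pe (pe x k) n))) (ps (pe (pe x k) n)) then 0 else 1) = (0::nat))"
    by (rule mn_halt) (rule cgp_ev)
  also have "\<dots> \<longleftrightarrow> (\<exists>s. gp x k s)" by simp
  finally show ?thesis .
qed

lemma K_iff: "e \<in> K \<longleftrightarrow> (\<exists>s. inK e s)"
  unfolding K_def inK_def using halt_iff by blast

lemma wit_K: "wit u0 k \<in> K \<longleftrightarrow> (\<exists>s. gp (wit u0 k) k s)"
proof -
  have "wit u0 k \<in> K \<longleftrightarrow> (\<exists>y. ev (wprog U k) (wit u0 k) y)"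
    unfolding K_def phi_def u0_def code_wprog[symmetric] using code_inj by blast
  then show ?thesis using halt_wprog by blast
qed

lemma inK_mono: "inK e s \<Longrightarrow> s \<le> s' \<Longrightarrow> inK e s'"
  unfolding inK_def using Kw_mono by blast

lemma Tb_props: "inK e s \<Longrightarrow> inK e (Tb e s) \<and> Tb e s \<le> s \<and> (\<forall>t<Tb e s. \<not> inK e t)"
proof -
  assume a: "inK e s"
  have lt: "Tb e s < Suc s" unfolding Tb_def using bmin_ex[of "inK e" s "Suc s"] a by simp
  then show ?thesis unfolding Tb_def using bmin_P bmin_min by (metis less_Suc_eq_le)
qed

lemma Tb_stable: "inK e t \<Longrightarrow> t \<le> s' \<Longrightarrow> Tb e s' = Tb e t"
proof -
  assume a: "inK e t" "t \<le> s'"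
  then have b: "inK e s'" using inK_mono by blast
  from Tb_props[OF a(1)] have t1: "inK e (Tb e t)" "Tb e t \<le> t" "\<forall>j<Tb e t. \<not> inK e j" by auto
  from Tb_props[OF b] have t2: "inK e (Tb e s')" "Tb e s' \<le> s'" "\<forall>j<Tb e s'. \<not> inK e j" by auto
  have "\<not> Tb e s' < Tb e t" using t1(3) t2(1) by blast
  moreover have "\<not> Tb e t < Tb e s'" using t2(3) t1(1) by blast
  ultimately show ?thesis by simp
qed

lemma inA_mono: "inA u z s \<Longrightarrow> s \<le> s' \<Longrightarrow> inA u z s'"
  unfolding inA_def using inK_mono Tb_stable by metis

lemma card_UN2:
  "card (\<Union>r<e. \<Union>m<Suc (Suc r). X r m) \<le> (\<Sum>r<e. \<Sum>m<Suc (Suc r). card (X r m))"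
proof -
  have "card (\<Union>r<e. \<Union>m<Suc (Suc r). X r m) \<le> (\<Sum>r<e. card (\<Union>m<Suc (Suc r). X r m))"
    by (rule card_UN_le) simp
  also have "\<dots> \<le> (\<Sum>r<e. \<Sum>m<Suc (Suc r). card (X r m))"
    by (rule sum_mono) (rule card_UN_le, simp)
  finally show ?thesis .
qed

lemma free_slot: "\<exists>i<bsz e. \<not> rest u e s (pe e i)"
proof (rule ccontr)
  assume "\<not> (\<exists>i<bsz e. \<not> rest u e s (pe e i))"
  then have all: "\<forall>i<bsz e. rest u e s (pe e i)" by blast
  define X where "X r m = (if Fready u r m s then bset (Fv u r m s) else {})" for r m
  define R where "R = (\<Union>r<e. \<Union>m<Suc (Suc r). X r m)"
  have finR: "finite R" unfolding R_def X_def by (auto simp: finite_bset)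
  have sub: "(\<lambda>i. pe e i) ` {..<bsz e} \<subseteq> R"
  proof
    fix z assume "z \<in> (\<lambda>i. pe e i) ` {..<bsz e}"
    then have "rest u e s z" using all by auto
    then show "z \<in> R" unfolding rest_def R_def X_def bset_def by auto
  qed
  have "card ((\<lambda>i. pe e i) ` {..<bsz e}) = bsz e"
    by (subst card_image) (auto simp: inj_on_def)
  then have "bsz e \<le> card R" using card_mono[OF finR sub] by simp
  also have "card R \<le> (\<Sum>r<e. \<Sum>m<Suc (Suc r). card (X r m))" unfolding R_def by (rule card_UN2)
  also have "\<dots> \<le> (\<Sum>r<e. \<Sum>m<Suc (Suc r). e)"
  proof (rule sum_mono, rule sum_mono)
    fix r m assume r: "r \<in> {..<e}"
    show "card (X r m) \<le> e"
    proof (cases "Fready u r m s")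
      case True
      then have "card (X r m) = popc (Fv u r m s)" by (simp add: X_def popc_card)
      also have "\<dots> \<le> ps r" using True Fready_def by simp
      also have "\<dots> \<le> r" by (rule ps_le)
      finally show ?thesis using r by simp
    qed (simp add: X_def)
  qed
  also have "\<dots> = (\<Sum>r<e. Suc (Suc r) * e)" by simp
  also have "\<dots> \<le> (\<Sum>r<e. Suc e * e)" by (rule sum_mono, rule mult_le_mono1) simp
  also have "\<dots> = e * (Suc e * e)" by simp
  finally have "bsz e \<le> e * (Suc e * e)" .
  moreover have "e * (Suc e * e) < bsz e"
  proof -
    have "e * (Suc e * e) \<le> Suc e * (Suc e * e)" by (rule mult_le_mono1) simp
    also have "\<dots> < Suc e * (Suc e * Suc e)" by (rule mult_less_mono2, rule mult_less_mono2) simp_all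
    finally show ?thesis unfolding bsz_def by (simp only: mult.assoc)
  qed
  ultimately show False by simp
qed

lemma ie_props: "ie u e s < bsz e \<and> \<not> rest u e s (pe e (ie u e s))"
proof -
  obtain i where i: "i < bsz e" "\<not> rest u e s (pe e i)" using free_slot by blast
  have "ie u e s < bsz e" unfolding ie_def by (rule bmin_ex[where P="\<lambda>i. \<not> rest u e s (pe e i)", OF i(2) i(1)])
  then show ?thesis unfolding ie_def using bmin_P by metis
qed



definition A0 :: "nat set" where "A0 = {z. \<exists>s. inA u0 z s}"

lemma tot_computable: "tot g \<Longrightarrow> computable g"
  unfolding tot_def computable_def phi_def by blast

lemma re_A0: "re A0"
proof -
  have "dec (\<lambda>w. inA u0 (pf w) (ps w))" by (intro dec_inA tot_intros)
  then obtain ca where ca: "\<And>w. ev ca w (if inA u0 (pf w) (ps w) then 0 else 1)"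
    unfolding dec_def tot_def by blast
  have "A0 = {x. \<exists>y. phi (code (Mn ca)) x y}"
  proof -
    have "\<And>x. (\<exists>y. phi (code (Mn ca)) x y) \<longleftrightarrow> (\<exists>y. ev (Mn ca) x y)"
      unfolding phi_def using code_inj by blast
    moreover have "\<And>x. (\<exists>y. ev (Mn ca) x y) \<longleftrightarrow> (\<exists>n. (if inA u0 (pf (pe x n)) (ps (pe x n)) then 0 else 1) = (0::nat))"
      by (rule mn_halt) (rule ca)
    ultimately show ?thesis unfolding A0_def by auto
  qed
  then show ?thesis unfolding re_def by blast
qed

definition fblk :: "nat \<Rightarrow> nat set" where "fblk e = (\<lambda>i. pe e i) ` {..<bsz e}"

lemma canon_fblk: "canon (fblk e) = (\<Sum>i<bsz e. 2 ^ pe e i)"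
  unfolding canon_def fblk_def by (subst sum.reindex) (auto simp: inj_on_def)

lemma computable_fblk: "computable_fin fblk"
  unfolding computable_fin_def
proof
  show "\<forall>e. finite (fblk e)" by (simp add: fblk_def)
  have "tot (\<lambda>e. \<Sum>i<bsz e. 2 ^ pe e i)" unfolding bsz_def by (intro tot_intros)
  then show "computable (\<lambda>e. canon (fblk e))" unfolding canon_fblk by (rule tot_computable)
qed

lemma d_complete_A0: "d_complete A0"
  unfolding d_complete_def
proof (intro conjI exI[of _ fblk] allI)
  show "re A0" by (rule re_A0)
  show "computable_fin fblk" by (rule computable_fblk)
  fix e
  show "e \<in> K \<longleftrightarrow> (\<exists>z\<in>fblk e. z \<in> A0)"
  proof
    assume "e \<in> K"
    then obtain s where s: "inK e s" using K_iff by blast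
    define z where "z = pe e (ie u0 e (Tb e s))"
    have "z \<in> fblk e" unfolding z_def fblk_def using ie_props by blast
    moreover have "inA u0 z s" unfolding inA_def z_def using s by simp
    ultimately show "\<exists>z\<in>fblk e. z \<in> A0" unfolding A0_def by blast
  next
    assume "\<exists>z\<in>fblk e. z \<in> A0"
    then obtain i s where "inA u0 (pe e i) s" unfolding fblk_def A0_def by blast
    then have "inK e s" unfolding inA_def by simp
    then show "e \<in> K" using K_iff by blast
  qed
qed

lemma cnt_card: "cnt r s = card {e. e < Suc r \<and> inK e s}"
proof -
  have "cnt r s = (\<Sum>e\<in>{e\<in>{..<Suc r}. inK e s}. 1)"
    unfolding cnt_def by (subst sum.inter_filter) simp_all
  also have "{e\<in>{..<Suc r}. inK e s} = {e. e < Suc r \<and> inK e s}" by auto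
  finally show ?thesis by simp
qed

lemma low_eventually: "\<exists>s1. \<forall>e<N. e \<in> K \<longrightarrow> inK e s1"
proof (induction N)
  case 0 then show ?case by simp
next
  case (Suc N)
  then obtain s1 where s1: "\<forall>e<N. e \<in> K \<longrightarrow> inK e s1" by blast
  show ?case
  proof (cases "N \<in> K")
    case True
    then obtain s2 where s2: "inK N s2" using K_iff by blast
    have "\<forall>e<Suc N. e \<in> K \<longrightarrow> inK e (max s1 s2)"
      using s1 s2 inK_mono by (metis less_Suc_eq max.cobounded1 max.cobounded2)
    then show ?thesis by blast
  next
    case False
    then have "\<forall>e<Suc N. e \<in> K \<longrightarrow> inK e s1" using s1 less_Suc_eq by blast
    then show ?thesis by blast
  qed
qed

lemma not_nd: "\<not> n_d_complete n A0"
proof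
  assume "n_d_complete n A0"
  then obtain f' where cf: "computable_fin f'" and cardf: "\<forall>e. card (f' e) \<le> n"
    and red: "\<forall>e. e \<in> K \<longleftrightarrow> (\<exists>z\<in>f' e. z \<in> A0)"
    unfolding n_d_complete_def by blast
  from cf obtain c where c: "\<forall>x. phi c x (canon (f' x))" and fin: "\<forall>e. finite (f' e)"
    unfolding computable_fin_def computable_def by blast
  define r where "r = pe c n"
  define mst where "mst = card {e. e < Suc r \<and> e \<in> K}"
  define k where "k = pe r mst"
  define x where "x = wit u0 k"
  define F where "F = f' x"
  define Fc where "Fc = canon F"
  have pk: "pf (pf k) = c" "ps (pf k) = n" "ps k = mst" "pf (ps x) = u0" "pf r = c" "ps r = n"
    by (simp_all add: k_def r_def x_def wit_def)
  have finF: "finite F" using fin F_def by simp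
  have bF: "bset Fc = F" using bset_canon[OF finF] Fc_def by simp
  have pF: "popc Fc \<le> n" using popc_canon[OF finF] cardf Fc_def F_def by simp
  have phiF: "phi c x Fc" using c F_def Fc_def by simp
  obtain s0 where s0: "Kw c x s0" using Kw_complete[OF phiF] by blast
  have outF: "\<And>s. Kw c x s \<Longrightarrow> nout (nrun c x s) = Fc" using Kw_out phiF by blast
  have cnt_le: "\<And>s. cnt r s \<le> mst"
    unfolding cnt_card mst_def by (rule card_mono) (auto simp: K_iff)
  have cnt_mono: "\<And>s s'. s \<le> s' \<Longrightarrow> cnt r s \<le> cnt r s'"
    unfolding cnt_card by (rule card_mono) (auto intro: inK_mono)
  obtain s1 where s1: "\<forall>e<Suc r. e \<in> K \<longrightarrow> inK e s1" using low_eventually by blast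
  have cnt_s1: "cnt r s1 = mst"
  proof -
    have "{e. e < Suc r \<and> inK e s1} = {e. e < Suc r \<and> e \<in> K}" using s1 K_iff by blast
    then show ?thesis unfolding cnt_card mst_def by simp
  qed
  have ready_iff: "\<And>s. ready x k s \<longleftrightarrow> Kw c x s \<and> popc (nout (nrun c x s)) \<le> n \<and> mst \<le> cnt r s"
    unfolding ready_def pk by (simp add: k_def)
  have "ready x k (max s0 s1)"
  proof -
    have K1: "Kw c x (max s0 s1)" using Kw_mono[OF s0] by simp
    moreover have "popc (nout (nrun c x (max s0 s1))) \<le> n" using outF[OF K1] pF by simp
    moreover have "mst \<le> cnt r (max s0 s1)" using cnt_mono[of s1 "max s0 s1"] cnt_s1 by simp
    ultimately show ?thesis using ready_iff by blast
  qed
  define ss where "ss = (LEAST s. ready x k s)"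
  have rss: "ready x k ss" unfolding ss_def by (rule LeastI) fact
  have minss: "\<And>s. s < ss \<Longrightarrow> \<not> ready x k s" unfolding ss_def using not_less_Least by blast
  have Kwss: "Kw c x ss" using rss ready_iff by blast
  have cntss: "cnt r ss = mst" using rss ready_iff cnt_le le_antisym by blast
  have stable: "\<And>e s. e < Suc r \<Longrightarrow> ss \<le> s \<Longrightarrow> inK e s \<Longrightarrow> inK e ss"
  proof (rule ccontr)
    fix e s assume a: "e < Suc r" "ss \<le> s" "inK e s" "\<not> inK e ss"
    have "{e. e < Suc r \<and> inK e ss} \<subset> {e. e < Suc r \<and> inK e s}"
      using a inK_mono by blast
    then have "card {e. e < Suc r \<and> inK e ss} < card {e. e < Suc r \<and> inK e s}"
      by (rule psubset_card_mono[rotated]) simp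
    then have "cnt r ss < cnt r s" unfolding cnt_card .
    then show False using cntss cnt_le[of s] by simp
  qed
  have gp_iff: "(\<exists>s. gp x k s) \<longleftrightarrow> (\<forall>z\<in>F. \<not> inA u0 z ss)"
  proof
    assume "\<exists>s. gp x k s"
    then obtain s where g: "gp x k s" by blast
    then have rs: "ready x k s" and mins: "\<forall>s'<s. \<not> ready x k s'"
      and rest: "\<forall>z<nout (nrun c x s). odd (nout (nrun c x s) div 2 ^ z) \<longrightarrow> \<not> inA u0 z s"
      unfolding gp_def pk by auto
    have "s = ss"
    proof (rule ccontr)
      assume "s \<noteq> ss"
      then consider "s < ss" | "ss < s" by linarith
      then show False using rs mins minss rss by cases blast+
    qed
    moreover have "nout (nrun c x s) = Fc" using rs ready_iff outF by blast
    ultimately show "\<forall>z\<in>F. \<not> inA u0 z ss"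
      using rest bF bset_sub unfolding bset_def by auto
  next
    assume a: "\<forall>z\<in>F. \<not> inA u0 z ss"
    have "gp x k ss"
      unfolding gp_def pk
    proof (intro conjI allI impI)
      show "ready x k ss" by (rule rss)
      show "\<And>s'. s' < ss \<Longrightarrow> \<not> ready x k s'" by (rule minss)
      fix z assume "z < nout (nrun c x ss)" "odd (nout (nrun c x ss) div 2 ^ z)"
      then have "z \<in> F" using outF[OF Kwss] bF unfolding bset_def by auto
      then show "\<not> inA u0 z ss" using a by blast
    qed
    then show "\<exists>s. gp x k s" by blast
  qed
  have xK: "x \<in> K \<longleftrightarrow> (\<forall>z\<in>F. \<not> inA u0 z ss)"
    using wit_K[of k] gp_iff unfolding x_def by simp
  show False
  proof (cases "\<forall>z\<in>F. \<not> inA u0 z ss")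
    case False
    then obtain z where "z \<in> F" "inA u0 z ss" by blast
    then have "x \<in> K" using red F_def A0_def by blast
    then show False using xK False by blast
  next
    case True
    then have "x \<in> K" using xK by blast
    then obtain z where zF: "z \<in> F" and "z \<in> A0" using red F_def by blast
    then obtain s where zs: "inA u0 z s" unfolding A0_def by blast
    define e where "e = pf z"
    define T where "T = Tb e s"
    have ks: "inK e s" and zi: "ps z = ie u0 e T" using zs unfolding inA_def e_def T_def by auto
    from Tb_props[OF ks] have T: "inK e T" "T \<le> s" "\<forall>t<T. \<not> inK e t" unfolding T_def by auto
    have "\<not> T \<le> ss"
    proof
      assume "T \<le> ss"
      then have "inK e ss" using T(1) inK_mono by blast
      moreover have "Tb e ss = Tb e T" using Tb_stable[OF T(1) \<open>T \<le> ss\<close>] .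
      moreover have "Tb e s = Tb e T" using Tb_stable[OF T(1) T(2)] .
      ultimately have "inA u0 z ss" unfolding inA_def using zi T_def e_def by simp
      then show False using True zF by blast
    qed
    then have ssT: "ss < T" by simp
    show False
    proof (cases "e < Suc r")
      case True
      then have "inK e ss" using stable[of e T] ssT T(1) by simp
      then show False using T(3) ssT by blast
    next
      case False
      then have re: "r < e" by simp
      have KwT: "Kw c x T" using Kw_mono[OF Kwss] ssT by simp
      have mle: "mst < Suc (Suc r)"
      proof -
        have "mst \<le> card {..<Suc r}" unfolding mst_def by (rule card_mono) auto
        then show ?thesis by simp
      qed
      have xw: "wit u0 (pe r mst) = x" by (simp add: x_def k_def)
      have FvT: "Fv u0 r mst T = Fc" unfolding Fv_def xw pk using outF[OF KwT] .
      have "Fready u0 r mst T" unfolding Fready_def xw pk FvT using KwT pF by simp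
      moreover have "odd (Fc div 2 ^ z)" using zF bF unfolding bset_def by auto
      ultimately have "rest u0 e T z" unfolding rest_def using re mle FvT by blast
      moreover have "z = pe e (ie u0 e T)" using zi e_def by (metis pe_pf_ps)
      ultimately show False using ie_props[of u0 e T] by simp
    qed
  qed
qed

theorem mainTheorem8:
  shows "\<exists>A :: nat set. d_complete A \<and> (\<forall>n. \<not> n_d_complete n A)"
  using d_complete_A0 not_nd by blast


end
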